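(* Let $\underline x=(x_1,\dots,x_n)$ be a labeled configuration of $n\ge2$ particles at distinct sites of $\Lambda_N$, let $t>s>0$, and let $f:\Lambda_N^n\to\mathbb{R}$ be antisymmetric under exchange of its first two arguments $y_1,y_2$. Then $$\mathbf{E}_{\epsilon,\underline x}\big[\mathbf 1_{\tau_{x_1,x_2}\le s}\,f(\underline x(t))\big]=0.$$
   Context: $\Lambda_N=[-N,N]\cap\mathbb Z$, $\epsilon=1/N$. Active/passive marks process: for each pair $\{x,x+1\}$, $x\in\mathbb Z$, an independent Poisson process of intensity $\epsilon^{-2}$ (its events are "marks"), and each mark is independently declared "active" or "passive" with probability $1/2$ each; law $\mathbf P_\epsilon$, expectation $\mathbf E_\epsilon$. Labeled stirring particles in $\Lambda_N$ evolve as follows: when an active mark appears at a pair $\{x,y\}$ with both $x,y\in\Lambda_N$, the contents of $x$ and $y$ are exchanged (a particle at $x$ moves to $y$ and a particle at $y$, if any, moves to $x$); passive marks and marks at pairs not contained in $\Lambda_N$ have no effect. Labels stay attached to particles; $\underline x(t)=(x_1(t),\dots,x_n(t))$ is the labeled configuration at time $t$ and $\mathbf E_{\epsilon,\underline x}$ denotes expectation when $\underline x(0)=\underline x$. $\tau_{x_1,x_2}$ is the first time $s\ge0$ such that $|x_1(s)-x_2(s)|=1$ and a mark (active or passive) appears at time $s$ at the pair $\{x_1(s),x_2(s)\}$ ($\tau_{x_1,x_2}=\infty$ if no such time). *)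

theory Defs
  imports "HOL-Probability.Probability"
begin

text \<open>A sample point \<omega> :: int => nat => real * bool describes, for each pair {x,x+1}
(indexed by x :: int), the sequence of its marks: fst (\<omega> x k) is the k-th inter-arrival
time (exponential with rate eps^-2 = N^2), snd (\<omega> x k) says whether the k-th mark is
active (True) or passive (False), with probability 1/2 each.\<close>

definition mark_law :: "nat \<Rightarrow> (real \<times> bool) measure" where
  "mark_law N = density lborel (exponential_density ((real N)\<^sup>2))
                 \<Otimes>\<^sub>M measure_pmf (bernoulli_pmf (1/2))"

definition marks_measure :: "nat \<Rightarrow> (int \<Rightarrow> nat \<Rightarrow> real \<times> bool) measure" where
  "marks_measure N = PiM UNIV (\<lambda>x::int. PiM UNIV (\<lambda>k::nat. mark_law N))"

definition mark_time :: "(int \<Rightarrow> nat \<Rightarrow> real \<times> bool) \<Rightarrow> int \<Rightarrow> nat \<Rightarrow> real" where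
  "mark_time \<omega> x k = (\<Sum>j\<le>k. fst (\<omega> x j))"

definition mark_active :: "(int \<Rightarrow> nat \<Rightarrow> real \<times> bool) \<Rightarrow> int \<Rightarrow> nat \<Rightarrow> bool" where
  "mark_active \<omega> x k = snd (\<omega> x k)"

definition Lambda :: "nat \<Rightarrow> int set" where
  "Lambda N = {- int N .. int N}"

text \<open>The effective
marks up to time r are processed in increasing order of their times; active marks at exactly
the same time (a null event) are processed in increasing order of the pair index.\<close>
definition effective_times :: "nat \<Rightarrow> (int \<Rightarrow> nat \<Rightarrow> real \<times> bool) \<Rightarrow> real \<Rightarrow> real set" where
  "effective_times N \<omega> r =
     {mark_time \<omega> x k | x k. - int N \<le> x \<and> x + 1 \<le> int N \<and> mark_time \<omega> x k \<le> r}"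

definition active_pairs_at :: "nat \<Rightarrow> (int \<Rightarrow> nat \<Rightarrow> real \<times> bool) \<Rightarrow> real \<Rightarrow> int set" where
  "active_pairs_at N \<omega> u =
     {x. - int N \<le> x \<and> x + 1 \<le> int N \<and> (\<exists>k. mark_time \<omega> x k = u \<and> mark_active \<omega> x k)}"

definition swap_site :: "int \<Rightarrow> int \<Rightarrow> int" where
  "swap_site x p = (if p = x then x + 1 else if p = x + 1 then x else p)"

definition step_at :: "nat \<Rightarrow> (int \<Rightarrow> nat \<Rightarrow> real \<times> bool) \<Rightarrow> real \<Rightarrow> int list \<Rightarrow> int list" where
  "step_at N \<omega> u ys =
     fold (\<lambda>x zs. map (swap_site x) zs) (sorted_list_of_set (active_pairs_at N \<omega> u)) ys"

text \<open>Labeled configuration x(r) at time r (right-continuous), started from the labeled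
configuration xs (xs ! i = position of particle i+1).\<close>
definition config :: "nat \<Rightarrow> (int \<Rightarrow> nat \<Rightarrow> real \<times> bool) \<Rightarrow> int list \<Rightarrow> real \<Rightarrow> int list" where
  "config N \<omega> xs r = fold (step_at N \<omega>) (sorted_list_of_set (effective_times N \<omega> r)) xs"

definition tau12 :: "nat \<Rightarrow> (int \<Rightarrow> nat \<Rightarrow> real \<times> bool) \<Rightarrow> int list \<Rightarrow> ereal" where
  "tau12 N \<omega> xs = Inf (ereal ` {r. 0 \<le> r \<and>
      (let c = config N \<omega> xs r in
        \<bar>c ! 0 - c ! 1\<bar> = 1 \<and>
        (\<exists>x k. mark_time \<omega> x k = r \<and> {x, x + 1} = {c ! 0, c ! 1}))})"

end

theory Submission
  imports Defs
begin


lemma ps_exp: "N \<ge> 1 \<Longrightarrow> prob_space (density lborel (exponential_density ((real N)\<^sup>2)))"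
  by (rule prob_space_exponential_density) simp

lemma ps_ml: "N \<ge> 1 \<Longrightarrow> prob_space (mark_law N)"
  unfolding mark_law_def
  by (intro prob_space_pair ps_exp prob_space_measure_pmf)

lemma ps_P: "N \<ge> 1 \<Longrightarrow> prob_space (PiM UNIV (\<lambda>k::nat. mark_law N))"
  by (intro prob_space_PiM ps_ml)

lemma ps_M: "N \<ge> 1 \<Longrightarrow> prob_space (marks_measure N)"
  unfolding marks_measure_def by (intro prob_space_PiM ps_P)

lemma sets_ml: "sets (mark_law N) = sets (borel \<Otimes>\<^sub>M count_space UNIV)"
  unfolding mark_law_def by (intro sets_pair_measure_cong) auto

lemma space_ml: "space (mark_law N) = UNIV"
  unfolding mark_law_def by (simp add: space_pair_measure)

lemma meas_coord[measurable]: "(\<lambda>\<omega>. \<omega> x k) \<in> measurable (marks_measure N) (mark_law N)"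
proof -
  have a: "(\<lambda>\<omega>. \<omega> x) \<in> measurable (PiM UNIV (\<lambda>x::int. PiM UNIV (\<lambda>k::nat. mark_law N))) (PiM UNIV (\<lambda>k::nat. mark_law N))"
    by (rule measurable_component_singleton) auto
  have b: "(\<lambda>\<psi>. \<psi> k) \<in> measurable (PiM UNIV (\<lambda>k::nat. mark_law N)) (mark_law N)"
    by (rule measurable_component_singleton) auto
  show ?thesis using measurable_compose[OF a b] by (simp add: marks_measure_def)
qed

lemma meas_fst[measurable]: "(\<lambda>\<omega>. fst (\<omega> x k)) \<in> borel_measurable (marks_measure N)"
proof -
  have "fst \<in> borel_measurable (mark_law N)"
    by (simp add: measurable_cong_sets[OF sets_ml refl])
  then show ?thesis by (rule measurable_compose[OF meas_coord])
qed

lemma meas_snd[measurable]: "(\<lambda>\<omega>. snd (\<omega> x k)) \<in> measurable (marks_measure N) (count_space UNIV)"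
proof -
  have "snd \<in> measurable (mark_law N) (count_space UNIV)"
    by (simp add: measurable_cong_sets[OF sets_ml refl])
  then show ?thesis by (rule measurable_compose[OF meas_coord])
qed

lemma meas_time[measurable]: "(\<lambda>\<omega>. mark_time \<omega> x k) \<in> borel_measurable (marks_measure N)"
  unfolding mark_time_def by measurable



lemma meas_upd:
  fixes M :: "'i \<Rightarrow> 'a measure"
  assumes h: "h \<in> measurable (M a) (M a)"
  shows "(\<lambda>w. w(a := h (w a))) \<in> measurable (PiM UNIV M) (PiM UNIV M)"
proof (rule measurable_fun_upd[where J=UNIV])
  have "(\<lambda>w. w a) \<in> measurable (PiM UNIV M) (M a)" by (rule measurable_component_singleton) auto
  then show "(\<lambda>w. h (w a)) \<in> measurable (PiM UNIV M) (M a)" using h by (rule measurable_compose)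
qed auto

lemma distr_PiM_upd:
  fixes M :: "'i \<Rightarrow> 'a measure"
  assumes ps: "\<And>i. prob_space (M i)" and h: "h \<in> measurable (M a) (M a)"
    and hd: "distr (M a) (M a) h = M a"
  shows "distr (PiM UNIV M) (PiM UNIV M) (\<lambda>w. w(a := h (w a))) = PiM UNIV M"
proof -
  interpret product_prob_space M UNIV
    using ps by (simp add: product_prob_space_def product_sigma_finite_def product_prob_space_axioms_def prob_space_imp_sigma_finite)
  let ?F = "\<lambda>w. w(a := h (w a))"
  have mF: "?F \<in> measurable (PiM UNIV M) (PiM UNIV M)" using meas_upd[of h M a] h by simp
  show ?thesis
  proof (rule PiM_eq)
    fix J F assume J: "finite J" "J \<subseteq> (UNIV::'i set)" and F: "\<And>j. j \<in> J \<Longrightarrow> F j \<in> sets (M j)"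
    define F' where "F' = F(a := h -` F a \<inter> space (M a))"
    have F': "\<And>j. j \<in> J \<Longrightarrow> F' j \<in> sets (M j)"
      using F h by (auto simp: F'_def measurable_sets)
    have eq: "?F -` prod_emb UNIV M J (Pi\<^sub>E J F) \<inter> space (PiM UNIV M) = prod_emb UNIV M J (Pi\<^sub>E J F')"
      using h[THEN measurable_space] F[THEN sets.sets_into_space]
      by (auto simp: prod_emb_def space_PiM PiE_iff F'_def extensional_def split: if_splits)
    have "emeasure (distr (PiM UNIV M) (PiM UNIV M) ?F) (prod_emb UNIV M J (Pi\<^sub>E J F))
        = emeasure (PiM UNIV M) (prod_emb UNIV M J (Pi\<^sub>E J F'))"
      using F J by (subst emeasure_distr[OF mF]) (auto simp: eq intro!: sets_PiM_I)
    also have "\<dots> = (\<Prod>j\<in>J. emeasure (M j) (F' j))"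
      using F' J by (intro emeasure_PiM_emb) auto
    also have "\<dots> = (\<Prod>j\<in>J. emeasure (M j) (F j))"
    proof (rule prod.cong[OF refl])
      fix j assume "j \<in> J"
      show "emeasure (M j) (F' j) = emeasure (M j) (F j)"
      proof (cases "j = a")
        case True
        have "emeasure (M a) (h -` F a \<inter> space (M a)) = emeasure (distr (M a) (M a) h) (F a)"
          using F \<open>j \<in> J\<close> True by (subst emeasure_distr[OF h]) auto
        then show ?thesis using True hd by (simp add: F'_def)
      qed (simp add: F'_def)
    qed
    finally show "emeasure (distr (PiM UNIV M) (PiM UNIV M) ?F) (prod_emb UNIV M J (Pi\<^sub>E J F)) = (\<Prod>j\<in>J. emeasure (M j) (F j))" .
  qed simp
qed



lemma bern_not: "map_pmf Not (bernoulli_pmf (1/2)) = bernoulli_pmf (1/2)"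
proof (rule pmf_eqI)
  fix i :: bool
  have "pmf (map_pmf Not (bernoulli_pmf (1/2))) (Not (Not i)) = pmf (bernoulli_pmf (1/2)) (Not i)"
    by (rule pmf_map_inj') (auto intro: injI)
  then show "pmf (map_pmf Not (bernoulli_pmf (1/2))) i = pmf (bernoulli_pmf (1/2)) i" by simp
qed

lemma distr_bern_not:
  "distr (measure_pmf (bernoulli_pmf (1/2))) (measure_pmf (bernoulli_pmf (1/2))) Not = measure_pmf (bernoulli_pmf (1/2))"
proof -
  have "distr (measure_pmf (bernoulli_pmf (1/2))) (measure_pmf (bernoulli_pmf (1/2))) Not
     = distr (measure_pmf (bernoulli_pmf (1/2))) (count_space UNIV) Not"
    by (rule distr_cong) auto
  also have "\<dots> = measure_pmf (map_pmf Not (bernoulli_pmf (1/2)))" by (simp add: map_pmf_rep_eq)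
  finally show ?thesis by (simp add: bern_not)
qed

definition flipb :: "real \<times> bool \<Rightarrow> real \<times> bool" where
  "flipb p = (fst p, \<not> snd p)"

lemma meas_flipb: "flipb \<in> measurable (mark_law N) (mark_law N)"
  unfolding flipb_def by (simp add: measurable_cong_sets[OF sets_ml sets_ml])

lemma distr_flipb: "N \<ge> 1 \<Longrightarrow> distr (mark_law N) (mark_law N) flipb = mark_law N"
proof -
  let ?D = "density lborel (exponential_density ((real N)\<^sup>2))"
  let ?B = "measure_pmf (bernoulli_pmf (1/2))"
  assume N: "N \<ge> 1"
  have "distr ?D ?D (\<lambda>x. x) \<Otimes>\<^sub>M distr ?B ?B Not = distr (?D \<Otimes>\<^sub>M ?B) (?D \<Otimes>\<^sub>M ?B) (\<lambda>(x, y). (x, Not y))"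
  proof (rule pair_measure_distr)
    show "sigma_finite_measure (distr ?B ?B Not)"
      unfolding distr_bern_not by (rule prob_space_imp_sigma_finite[OF prob_space_measure_pmf])
  qed auto
  then have "?D \<Otimes>\<^sub>M ?B = distr (?D \<Otimes>\<^sub>M ?B) (?D \<Otimes>\<^sub>M ?B) flipb"
    by (simp add: distr_bern_not case_prod_beta' flipb_def[abs_def])
  then show ?thesis by (simp add: mark_law_def)
qed

definition flipw :: "int \<Rightarrow> nat \<Rightarrow> (int \<Rightarrow> nat \<Rightarrow> real \<times> bool) \<Rightarrow> (int \<Rightarrow> nat \<Rightarrow> real \<times> bool)" where
  "flipw x k w = w(x := (w x)(k := flipb (w x k)))"

lemma meas_flipw: "flipw x k \<in> measurable (marks_measure N) (marks_measure N)"
proof -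
  have "(\<lambda>v. v(k := flipb (v k))) \<in> measurable (PiM UNIV (\<lambda>k::nat. mark_law N)) (PiM UNIV (\<lambda>k::nat. mark_law N))"
    by (rule meas_upd[of flipb "\<lambda>_. mark_law N" k, OF meas_flipb])
  then show ?thesis unfolding marks_measure_def flipw_def by (rule meas_upd)
qed

lemma distr_flipw: "N \<ge> 1 \<Longrightarrow> distr (marks_measure N) (marks_measure N) (flipw x k) = marks_measure N"
proof -
  assume N: "N \<ge> 1"
  have a: "distr (PiM UNIV (\<lambda>k::nat. mark_law N)) (PiM UNIV (\<lambda>k::nat. mark_law N)) (\<lambda>v. v(k := flipb (v k))) = PiM UNIV (\<lambda>k::nat. mark_law N)"
    by (rule distr_PiM_upd[OF ps_ml[OF N] meas_flipb distr_flipb[OF N]])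
  have b: "(\<lambda>v. v(k := flipb (v k))) \<in> measurable (PiM UNIV (\<lambda>k::nat. mark_law N)) (PiM UNIV (\<lambda>k::nat. mark_law N))"
    by (rule meas_upd[of flipb "\<lambda>_. mark_law N" k, OF meas_flipb])
  have "distr (PiM UNIV (\<lambda>_::int. PiM UNIV (\<lambda>k::nat. mark_law N))) (PiM UNIV (\<lambda>_::int. PiM UNIV (\<lambda>k::nat. mark_law N)))
     (\<lambda>w. w(x := (\<lambda>v. v(k := flipb (v k))) (w x))) = PiM UNIV (\<lambda>_::int. PiM UNIV (\<lambda>k::nat. mark_law N))"
    by (rule distr_PiM_upd[where M="\<lambda>_::int. PiM UNIV (\<lambda>k::nat. mark_law N)" and a=x, OF _ b a]) (rule ps_P[OF N])
  then show ?thesis unfolding marks_measure_def flipw_def by simp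
qed



lemma AE_D_ne: "AE x in density lborel (exponential_density l). x \<noteq> (c::real)"
proof (subst AE_density)
  show "AE x in lborel. 0 < ennreal (exponential_density l x) \<longrightarrow> x \<noteq> c"
    using AE_lborel_singleton[of c] by eventually_elim simp
qed simp

lemma AE_D_pos: "AE x in density lborel (exponential_density l). x > 0"
proof (subst AE_density)
  show "AE x in lborel. 0 < ennreal (exponential_density l x) \<longrightarrow> 0 < x"
    using AE_lborel_singleton[of 0] by eventually_elim (auto simp: exponential_density_def)
qed simp

lemma AE_ml_fst:
  assumes N: "N \<ge> 1" and ae: "AE x in density lborel (exponential_density ((real N)\<^sup>2)). P x"
    and meas: "{x \<in> space borel. P x} \<in> sets borel"
  shows "AE b in mark_law N. P (fst b)"
proof -
  let ?D = "density lborel (exponential_density ((real N)\<^sup>2))"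
  let ?B = "measure_pmf (bernoulli_pmf (1/2))"
  interpret D: prob_space ?D by (rule ps_exp[OF N])
  interpret pair_sigma_finite ?D ?B
    by (intro pair_sigma_finite.intro prob_space_imp_sigma_finite D.prob_space_axioms prob_space_measure_pmf)
  have "AE z in ?D \<Otimes>\<^sub>M ?B. P (fst z)"
  proof (rule AE_pair_measure)
    have "{z \<in> space (?D \<Otimes>\<^sub>M ?B). P (fst z)} = fst -` {x \<in> space borel. P x} \<inter> space (?D \<Otimes>\<^sub>M ?B)"
      by (auto simp: space_pair_measure)
    also have "\<dots> \<in> sets (?D \<Otimes>\<^sub>M ?B)"
      by (rule measurable_sets[OF measurable_fst'' meas]) simp
    finally show "{z \<in> space (?D \<Otimes>\<^sub>M ?B). P (fst z)} \<in> sets (?D \<Otimes>\<^sub>M ?B)" .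
    show "AE x in ?D. AE y in ?B. P (fst (x, y))" using ae by eventually_elim simp
  qed
  then show ?thesis unfolding mark_law_def .
qed

lemma ml_le: assumes N: "N \<ge> 1" and t: "0 \<le> t"
  shows "emeasure (mark_law N) {b. fst b \<le> t} = ennreal (1 - exp (- t * (real N)\<^sup>2))"
proof -
  let ?D = "density lborel (exponential_density ((real N)\<^sup>2))"
  let ?B = "measure_pmf (bernoulli_pmf (1/2))"
  interpret D: prob_space ?D by (rule ps_exp[OF N])
  have dist: "distributed ?D lborel (\<lambda>x. x) (exponential_density ((real N)\<^sup>2))"
    unfolding distributed_def by (auto simp: distr_id2)
  have "{b. fst b \<le> t} = {..t} \<times> (UNIV :: bool set)" by auto
  then have "emeasure (mark_law N) {b. fst b \<le> t} = emeasure ?D {..t} * emeasure ?B UNIV"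
    unfolding mark_law_def
    by (simp add: measure_pmf.emeasure_pair_measure_Times)
  also have "emeasure ?D {..t} = ennreal (D.prob {x \<in> space ?D. x \<le> t})"
    by (simp add: D.emeasure_eq_measure Collect_mem_eq atMost_def)
  also have "D.prob {x \<in> space ?D. x \<le> t} = 1 - exp (- t * (real N)\<^sup>2)"
    using D.exponential_distributedD_le[OF dist t] N by simp
  finally show ?thesis by (simp add: measure_pmf.emeasure_space_1[simplified])
qed



lemma AE_P_exists:
  assumes N: "N \<ge> 1" and t: "0 \<le> t"
  shows "AE \<psi> in PiM UNIV (\<lambda>k::nat. mark_law N). \<exists>j. fst (\<psi> j) > t"
proof -
  let ?P = "PiM UNIV (\<lambda>k::nat. mark_law N)"
  define p where "p = 1 - exp (- t * (real N)\<^sup>2)"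
  have p0: "0 \<le> p" and p1: "p < 1" using t by (auto simp: p_def)
  define Bt where "Bt = {b::real\<times>bool. fst b \<le> t}"
  have Bt: "Bt \<in> sets (mark_law N)"
  proof -
    have "{b::real\<times>bool. fst b \<le> t} = {b \<in> space (borel \<Otimes>\<^sub>M count_space UNIV). fst b \<le> t}"
      by (auto simp: space_pair_measure)
    also have "\<dots> \<in> sets (borel \<Otimes>\<^sub>M count_space UNIV)" by measurable
    finally show ?thesis unfolding Bt_def sets_ml .
  qed
  have eB: "emeasure (mark_law N) Bt = ennreal p" unfolding Bt_def p_def by (rule ml_le[OF N t])
  define A where "A = {\<psi> \<in> space ?P. \<forall>j. fst (\<psi> j) \<le> t}"
  have Am: "A \<in> sets ?P"
  proof -
    have "\<And>j. (\<lambda>\<psi>. \<psi> j) \<in> measurable ?P (mark_law N)" by (rule measurable_component_singleton) auto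
    then have [measurable]: "\<And>j. (\<lambda>\<psi>. fst (\<psi> j)) \<in> borel_measurable ?P"
      by (rule measurable_compose) (simp add: measurable_cong_sets[OF sets_ml refl])
    show ?thesis unfolding A_def by measurable
  qed
  have bound: "emeasure ?P A \<le> ennreal (p ^ Suc K)" for K
  proof -
    have "A \<subseteq> prod_emb UNIV (\<lambda>_. mark_law N) {..K} (Pi\<^sub>E {..K} (\<lambda>_. Bt))"
      by (auto simp: A_def prod_emb_def Bt_def space_PiM)
    then have "emeasure ?P A \<le> emeasure ?P (prod_emb UNIV (\<lambda>_. mark_law N) {..K} (Pi\<^sub>E {..K} (\<lambda>_. Bt)))"
      by (rule emeasure_mono) (auto intro!: sets_PiM_I Bt)
    also have "\<dots> = (\<Prod>j\<in>{..K}. emeasure (mark_law N) Bt)"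
      by (rule emeasure_PiM_emb) (auto simp: ps_ml[OF N] Bt)
    also have "\<dots> = ennreal (p ^ Suc K)" using p0 by (simp add: eB ennreal_power ennreal_mult)
    finally show ?thesis .
  qed
  have lim: "(\<lambda>K. ennreal (p ^ Suc K)) \<longlonglongrightarrow> 0"
  proof -
    have "(\<lambda>K. p ^ K) \<longlonglongrightarrow> 0" using p0 p1 by (intro LIMSEQ_power_zero) auto
    then have "(\<lambda>K. p ^ Suc K) \<longlonglongrightarrow> 0" by (rule LIMSEQ_Suc)
    then have "(\<lambda>K. ennreal (p ^ Suc K)) \<longlonglongrightarrow> ennreal 0" by (rule tendsto_ennrealI)
    then show ?thesis by simp
  qed
  have "emeasure ?P A \<le> 0"
    by (rule tendsto_le[OF sequentially_bot lim tendsto_const]) (use bound in \<open>simp del: power_Suc\<close>)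
  then have "A \<in> null_sets ?P" using Am by (simp add: null_sets_def)
  then show ?thesis
    by (rule AE_I') (auto simp: A_def not_less)
qed



lemma meas_fst_P[measurable]: "(\<lambda>\<psi>. fst (\<psi> j)) \<in> borel_measurable (PiM UNIV (\<lambda>k::nat. mark_law N))"
proof -
  have "(\<lambda>\<psi>. \<psi> j) \<in> measurable (PiM UNIV (\<lambda>k::nat. mark_law N)) (mark_law N)" by (rule measurable_component_singleton) auto
  then show ?thesis by (rule measurable_compose) (simp add: measurable_cong_sets[OF sets_ml refl])
qed

lemma meas_fst_P'[measurable]: "(\<lambda>\<psi>. fst (\<psi> j)) \<in> borel_measurable (PiM (UNIV - {0::nat}) (\<lambda>k::nat. mark_law N))"
  if "j \<noteq> 0"
proof -
  have "(\<lambda>\<psi>. \<psi> j) \<in> measurable (PiM (UNIV - {0::nat}) (\<lambda>k::nat. mark_law N)) (mark_law N)" by (rule measurable_component_singleton) (use that in auto)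
  then show ?thesis by (rule measurable_compose) (simp add: measurable_cong_sets[OF sets_ml refl])
qed

lemma AE_split_PiM:
  fixes M :: "'i \<Rightarrow> 'a measure"
  assumes ps: "\<And>i. prob_space (M i)" and meas: "{w \<in> space (PiM UNIV M). Q w} \<in> sets (PiM UNIV M)"
   and ae: "AE z in M i \<Otimes>\<^sub>M PiM (UNIV - {i}) M. Q ((snd z)(i := fst z))"
  shows "AE w in PiM UNIV M. Q w"
proof -
  have ins: "insert i (UNIV - {i}) = UNIV" by auto
  have d: "distr (M i \<Otimes>\<^sub>M PiM (UNIV - {i}) M) (PiM UNIV M) (\<lambda>(x, X). X(i := x)) = PiM UNIV M"
    using distr_pair_PiM_eq_PiM[of "UNIV - {i}" M i] ps by (simp add: ins)
  have m: "(\<lambda>(x, X). X(i := x)) \<in> measurable (M i \<Otimes>\<^sub>M PiM (UNIV - {i}) M) (PiM UNIV M)"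
  proof -
    have "(\<lambda>z. (snd z)(i := fst z)) \<in> measurable (M i \<Otimes>\<^sub>M PiM (UNIV - {i}) M) (PiM UNIV M)"
      by (rule measurable_fun_upd[where J="UNIV - {i}"]) auto
    then show ?thesis by (simp add: case_prod_beta')
  qed
  have "AE w in distr (M i \<Otimes>\<^sub>M PiM (UNIV - {i}) M) (PiM UNIV M) (\<lambda>(x, X). X(i := x)). Q w"
    using ae by (subst AE_distr_iff[OF m meas]) (simp add: case_prod_beta')
  then show ?thesis by (subst (asm) d)
qed

lemma AE_diag:
  assumes A: "prob_space A" and B: "prob_space B"
    and phi[measurable]: "\<phi> \<in> borel_measurable A" and psi[measurable]: "\<psi> \<in> borel_measurable B"
    and ae: "\<And>c. AE a in A. \<phi> a \<noteq> (c::real)"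
  shows "AE z in A \<Otimes>\<^sub>M B. \<phi> (fst z) \<noteq> \<psi> (snd z)"
proof -
  interpret pair_sigma_finite A B
    by (intro pair_sigma_finite.intro prob_space_imp_sigma_finite A B)
  have S: "{z \<in> space (A \<Otimes>\<^sub>M B). \<phi> (fst z) \<noteq> \<psi> (snd z)} \<in> sets (A \<Otimes>\<^sub>M B)"
    by measurable
  have "AE b in B. AE a in A. \<phi> a \<noteq> \<psi> b" by (intro AE_I2 ae)
  then have "AE a in A. AE b in B. \<phi> a \<noteq> \<psi> b"
    using AE_commute[of "\<lambda>a b. \<phi> a \<noteq> \<psi> b"] S by simp
  then show ?thesis
    by (intro AE_pair_measure S) simp
qed

lemma AE_ml_ne: "N \<ge> 1 \<Longrightarrow> AE b in mark_law N. fst b \<noteq> c"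
  by (rule AE_ml_fst[OF _ AE_D_ne]) auto

lemma AE_ml_pos: "N \<ge> 1 \<Longrightarrow> AE b in mark_law N. fst b > 0"
  by (rule AE_ml_fst[OF _ AE_D_pos]) auto

lemma sum_upd0: "(\<Sum>j\<le>k. fst (if j = 0 then b else Y j)) = fst b + (\<Sum>j\<in>{..k} - {0::nat}. fst (Y j))"
  by (subst sum.remove[of "{..k}" 0]) (auto intro!: sum.cong)

lemma AE_P_sum_ne:
  assumes N: "N \<ge> 1"
  shows "AE a in PiM UNIV (\<lambda>k::nat. mark_law N). (\<Sum>j\<le>k. fst (a j)) \<noteq> c"
proof (rule AE_split_PiM[where i=0])
  show "prob_space (mark_law N)" for i by (rule ps_ml[OF N])
  show "{w \<in> space (PiM UNIV (\<lambda>k::nat. mark_law N)). (\<Sum>j\<le>k. fst (w j)) \<noteq> c} \<in> sets (PiM UNIV (\<lambda>k::nat. mark_law N))"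
    by measurable
  have "AE z in mark_law N \<Otimes>\<^sub>M PiM (UNIV - {0}) (\<lambda>k::nat. mark_law N).
          fst (fst z) \<noteq> (\<lambda>Y. c - (\<Sum>j\<in>{..k} - {0::nat}. fst (Y j))) (snd z)"
  proof (rule AE_diag[OF ps_ml[OF N] prob_space_PiM[OF ps_ml[OF N]]])
    show "fst \<in> borel_measurable (mark_law N)" by (simp add: measurable_cong_sets[OF sets_ml refl])
    show "(\<lambda>Y. c - (\<Sum>j\<in>{..k} - {0::nat}. fst (Y j))) \<in> borel_measurable (PiM (UNIV - {0}) (\<lambda>k::nat. mark_law N))"
      by measurable
    show "AE a in mark_law N. fst a \<noteq> c'" for c' by (rule AE_ml_ne[OF N])
  qed
  then show "AE z in mark_law N \<Otimes>\<^sub>M PiM (UNIV - {0}) (\<lambda>k::nat. mark_law N). (\<Sum>j\<le>k. fst (((snd z)(0 := fst z)) j)) \<noteq> c"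
    by eventually_elim (simp add: sum_upd0 algebra_simps)
qed



lemma pred_time_eq[measurable]: "Measurable.pred (marks_measure N) (\<lambda>w. mark_time w x k = mark_time w x' k')"
  using borel_measurable_eq[OF meas_time meas_time] unfolding pred_def by simp

lemma AE_M_tie:
  assumes N: "N \<ge> 1" and xx: "x \<noteq> x'"
  shows "AE w in marks_measure N. mark_time w x k \<noteq> mark_time w x' k'"
proof -
  let ?P = "PiM UNIV (\<lambda>k::nat. mark_law N)"
  have "AE w in PiM UNIV (\<lambda>_::int. ?P). mark_time w x k \<noteq> mark_time w x' k'"
  proof (rule AE_split_PiM[where i=x])
    show "prob_space ?P" for i by (rule ps_P[OF N])
    have "{w \<in> space (marks_measure N). mark_time w x k \<noteq> mark_time w x' k'} \<in> sets (marks_measure N)"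
      by measurable
    then show "{w \<in> space (PiM UNIV (\<lambda>_::int. ?P)). mark_time w x k \<noteq> mark_time w x' k'} \<in> sets (PiM UNIV (\<lambda>_::int. ?P))"
      by (simp add: marks_measure_def)
    have mx: "(\<lambda>X. X x') \<in> measurable (PiM (UNIV - {x}) (\<lambda>_::int. ?P)) ?P"
      by (rule measurable_component_singleton) (use xx in auto)
    have "AE z in ?P \<Otimes>\<^sub>M PiM (UNIV - {x}) (\<lambda>_::int. ?P).
          (\<lambda>a. \<Sum>j\<le>k. fst (a j)) (fst z) \<noteq> (\<lambda>X. \<Sum>j\<le>k'. fst (X x' j)) (snd z)"
    proof (rule AE_diag[OF ps_P[OF N] prob_space_PiM[OF ps_P[OF N]]])
      show "(\<lambda>a. \<Sum>j\<le>k. fst (a j)) \<in> borel_measurable ?P" by measurable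
      show "(\<lambda>X. \<Sum>j\<le>k'. fst (X x' j)) \<in> borel_measurable (PiM (UNIV - {x}) (\<lambda>_::int. ?P))"
        by (intro borel_measurable_sum measurable_compose[OF mx meas_fst_P])
      show "AE a in ?P. (\<Sum>j\<le>k. fst (a j)) \<noteq> c" for c by (rule AE_P_sum_ne[OF N])
    qed
    then show "AE z in ?P \<Otimes>\<^sub>M PiM (UNIV - {x}) (\<lambda>_::int. ?P). mark_time ((snd z)(x := fst z)) x k \<noteq> mark_time ((snd z)(x := fst z)) x' k'"
      by eventually_elim (use xx in \<open>simp add: mark_time_def\<close>)
  qed
  then show ?thesis unfolding marks_measure_def .
qed

lemma AE_M_all:
  assumes N: "N \<ge> 1" and ae: "AE \<psi> in PiM UNIV (\<lambda>k::nat. mark_law N). Q \<psi>"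
  shows "AE w in marks_measure N. \<forall>x. Q (w x)"
  unfolding marks_measure_def
  by (rule AE_all_countable[THEN iffD2], rule allI, rule AE_PiM_component[OF ps_P[OF N] _ ae]) auto

lemma AE_P_all:
  assumes N: "N \<ge> 1" and ae: "AE b in mark_law N. Q b"
  shows "AE \<psi> in PiM UNIV (\<lambda>k::nat. mark_law N). \<forall>k. Q (\<psi> k)"
  by (rule AE_all_countable[THEN iffD2], rule allI, rule AE_PiM_component[OF ps_ml[OF N] _ ae]) auto

lemma AE_M_pos: "N \<ge> 1 \<Longrightarrow> AE w in marks_measure N. \<forall>x k. fst (w x k) > 0"
  by (rule AE_M_all, assumption, rule AE_P_all, assumption, rule AE_ml_pos)

lemma AE_M_exists: "N \<ge> 1 \<Longrightarrow> 0 \<le> t \<Longrightarrow> AE w in marks_measure N. \<forall>x. \<exists>j. fst (w x j) > t"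
  by (rule AE_M_all, assumption, rule AE_P_exists)

lemma AE_M_ties: "N \<ge> 1 \<Longrightarrow> AE w in marks_measure N. \<forall>x x' k k'. x \<noteq> x' \<longrightarrow> mark_time w x k \<noteq> mark_time w x' k'"
proof -
  assume N: "N \<ge> 1"
  have "\<forall>p::(int\<times>int)\<times>(nat\<times>nat). AE w in marks_measure N. fst (fst p) \<noteq> snd (fst p) \<longrightarrow> mark_time w (fst (fst p)) (fst (snd p)) \<noteq> mark_time w (snd (fst p)) (snd (snd p))"
  proof
    fix p :: "(int\<times>int)\<times>(nat\<times>nat)"
    show "AE w in marks_measure N. fst (fst p) \<noteq> snd (fst p) \<longrightarrow> mark_time w (fst (fst p)) (fst (snd p)) \<noteq> mark_time w (snd (fst p)) (snd (snd p))"
      using AE_M_tie[OF N, of "fst (fst p)" "snd (fst p)" "fst (snd p)" "snd (snd p)"]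
      by (cases "fst (fst p) = snd (fst p)") auto
  qed
  then have "AE w in marks_measure N. \<forall>p::(int\<times>int)\<times>(nat\<times>nat). fst (fst p) \<noteq> snd (fst p) \<longrightarrow> mark_time w (fst (fst p)) (fst (snd p)) \<noteq> mark_time w (snd (fst p)) (snd (snd p))"
    by (rule AE_all_countable[THEN iffD2])
  then show ?thesis by eventually_elim (metis fst_conv snd_conv)
qed



definition RR :: "nat \<Rightarrow> int set" where
  "RR N = {x. - int N \<le> x \<and> x + 1 \<le> int N}"

definition Good :: "real \<Rightarrow> (int \<Rightarrow> nat \<Rightarrow> real \<times> bool) \<Rightarrow> bool" where
  "Good t w \<longleftrightarrow> (\<forall>x k. fst (w x k) > 0) \<and> (\<forall>x. \<exists>j. fst (w x j) > t) \<and>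
     (\<forall>x x' k k'. x \<noteq> x' \<longrightarrow> mark_time w x k \<noteq> mark_time w x' k')"

definition timep :: "(int \<Rightarrow> nat \<Rightarrow> real \<times> bool) \<Rightarrow> int \<times> nat \<Rightarrow> real" where
  "timep w p = mark_time w (fst p) (snd p)"

definition Emk :: "nat \<Rightarrow> (int \<Rightarrow> nat \<Rightarrow> real \<times> bool) \<Rightarrow> real \<Rightarrow> (int \<times> nat) set" where
  "Emk N w r = {p. fst p \<in> RR N \<and> timep w p \<le> r}"

definition sm :: "nat \<Rightarrow> real \<Rightarrow> (int \<Rightarrow> nat \<Rightarrow> real \<times> bool) \<Rightarrow> (int \<times> nat) list" where
  "sm N t w = (SOME S. set S = Emk N w t \<and> sorted_wrt (\<lambda>p q. timep w p < timep w q) S)"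

lemma finite_RR: "finite (RR N)"
proof -
  have "RR N = {- int N .. int N - 1}" by (auto simp: RR_def)
  then show ?thesis by simp
qed

lemma time_Suc: "mark_time w x (Suc k) = mark_time w x k + fst (w x (Suc k))"
  by (simp add: mark_time_def)

lemma Good_mono: assumes "Good t w" "k < k'" shows "mark_time w x k < mark_time w x k'"
  using assms(2)
proof (induction k' rule: less_induct)
  case (less k')
  then obtain m where m: "k' = Suc m" by (cases k') auto
  have pos: "fst (w x (Suc m)) > 0" using assms(1) by (simp add: Good_def)
  show ?case
  proof (cases "k = m")
    case True then show ?thesis using pos m by (simp add: time_Suc)
  next
    case False
    then have "mark_time w x k < mark_time w x m" using less m by auto
    then show ?thesis using pos m by (simp add: time_Suc)
  qed
qed

lemma Good_mono_le: assumes "Good t w" "k \<le> k'" shows "mark_time w x k \<le> mark_time w x k'"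
  using Good_mono[OF assms(1)] assms(2) by (cases "k = k'") (auto intro: less_imp_le)

lemma Good_pos: assumes "Good t w" shows "mark_time w x k > 0"
proof -
  have "fst (w x 0) > 0" using assms by (simp add: Good_def)
  then have "mark_time w x 0 > 0" by (simp add: mark_time_def)
  then show ?thesis using Good_mono_le[OF assms, of 0 k x] by simp
qed

lemma Good_inj: assumes "Good t w" "mark_time w x k = mark_time w x' k'" shows "x = x' \<and> k = k'"
proof -
  have "x = x'" using assms unfolding Good_def by blast
  moreover have "k = k'"
    using Good_mono[OF assms(1), of k k' x] Good_mono[OF assms(1), of k' k x] assms(2) \<open>x = x'\<close>
    by (cases k k' rule: linorder_cases) auto
  ultimately show ?thesis by simp
qed

lemma Good_inj_p: "Good t w \<Longrightarrow> timep w p = timep w q \<Longrightarrow> p = q"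
  using Good_inj[of t w "fst p" "snd p" "fst q" "snd q"] by (auto simp: timep_def prod_eq_iff)

lemma Good_finite: assumes "Good t w" "r \<le> t" shows "finite (Emk N w r)"
proof -
  define J where "J x = (SOME j. fst (w x j) > t)" for x
  have J: "fst (w x (J x)) > t" for x
    using assms(1) unfolding J_def Good_def by (metis (mono_tags, lifting) someI_ex)
  have "Emk N w r \<subseteq> Sigma (RR N) (\<lambda>x. {..<J x})"
  proof (rule subsetI)
    fix p assume "p \<in> Emk N w r"
    obtain x k where p: "p = (x, k)" by (cases p)
    have x: "x \<in> RR N" and le: "mark_time w x k \<le> r" using \<open>p \<in> Emk N w r\<close> p by (auto simp: Emk_def timep_def)
    have "k \<in> {..<J x}"
    proof (rule ccontr)
      assume "k \<notin> {..<J x}"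
      then have "J x \<le> k" by simp
      then have "mark_time w x (J x) \<le> mark_time w x k" by (rule Good_mono_le[OF assms(1)])
      moreover have "fst (w x (J x)) \<le> mark_time w x (J x)"
      proof -
        have "fst (w x (J x)) \<le> (\<Sum>j\<le>J x. fst (w x j))"
          using assms(1) by (intro member_le_sum) (auto simp: Good_def less_imp_le)
        then show ?thesis by (simp add: mark_time_def)
      qed
      ultimately show False using J[of x] le assms(2) by simp
    qed
    then show "p \<in> Sigma (RR N) (\<lambda>x. {..<J x})" using x p by simp
  qed
  then show ?thesis by (rule finite_subset) (auto intro: finite_RR)
qed

lemma sorted_unique:
  assumes "sorted_wrt (\<lambda>p q. f p < (f q::real)) S1" "sorted_wrt (\<lambda>p q. f p < f q) S2" "set S1 = set S2"
  shows "S1 = S2"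
proof -
  have m1: "sorted_wrt (<) (map f S1)" and m2: "sorted_wrt (<) (map f S2)"
    using assms by (simp_all add: sorted_wrt_map)
  have "map f S1 = map f S2" using strict_sorted_equal[OF m2 m1] assms(3) by simp
  moreover have "inj_on f (set S1 \<union> set S2)"
  proof (rule inj_onI)
    fix p q assume "p \<in> set S1 \<union> set S2" "q \<in> set S1 \<union> set S2" "f p = f q"
    then have pq: "p \<in> set S1" "q \<in> set S1" using assms(3) by auto
    then obtain i j where "i < length S1" "j < length S1" "S1 ! i = p" "S1 ! j = q"
      by (auto simp: in_set_conv_nth)
    moreover have "\<forall>i j. i < j \<longrightarrow> j < length S1 \<longrightarrow> f (S1 ! i) < f (S1 ! j)"
      using assms(1) by (simp add: sorted_wrt_iff_nth_less)
    ultimately show "p = q" using \<open>f p = f q\<close>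
      by (metis linorder_neqE_nat less_irrefl)
  qed
  ultimately show ?thesis using inj_on_map_eq_map by blast
qed

lemma sm_spec: assumes "Good t w"
  shows "set (sm N t w) = Emk N w t \<and> sorted_wrt (\<lambda>p q. timep w p < timep w q) (sm N t w)"
proof -
  obtain L where L: "set L = Emk N w t" "distinct L"
    using finite_distinct_list[OF Good_finite[OF assms order_refl]] by blast
  let ?S = "sort_key (timep w) L"
  have "sorted (map (timep w) ?S)" by simp
  moreover have "distinct ?S" using L by simp
  ultimately have "sorted_wrt (\<lambda>p q. timep w p < timep w q) ?S"
    unfolding sorted_wrt_iff_nth_less
  proof (intro allI impI)
    fix i j assume ij: "i < j" "j < length ?S"
    have "timep w (?S ! i) \<le> timep w (?S ! j)"
      using \<open>sorted (map (timep w) ?S)\<close> ij by (simp add: sorted_iff_nth_mono)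
    moreover have "?S ! i \<noteq> ?S ! j" using \<open>distinct ?S\<close> ij by (simp add: nth_eq_iff_index_eq)
    then have "timep w (?S ! i) \<noteq> timep w (?S ! j)" using Good_inj_p[OF assms] by blast
    ultimately show "timep w (?S ! i) < timep w (?S ! j)" by simp
  qed
  then have "\<exists>S. set S = Emk N w t \<and> sorted_wrt (\<lambda>p q. timep w p < timep w q) S"
    using L by (intro exI[of _ ?S]) simp
  then show ?thesis unfolding sm_def by (rule someI_ex)
qed

lemma sm_unique: assumes "Good t w" "set S = Emk N w t" "sorted_wrt (\<lambda>p q. timep w p < timep w q) S"
  shows "sm N t w = S"
  using sorted_unique[of "timep w" "sm N t w" S] sm_spec[OF assms(1)] assms(2,3) by auto



definition stpw :: "(int \<Rightarrow> nat \<Rightarrow> real \<times> bool) \<Rightarrow> int \<times> nat \<Rightarrow> int list \<Rightarrow> int list" where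
  "stpw w p ys = (if snd (w (fst p) (snd p)) then map (swap_site (fst p)) ys else ys)"

lemma eff_times: "effective_times N w r = timep w ` Emk N w r"
proof (rule set_eqI)
  fix u
  show "u \<in> effective_times N w r \<longleftrightarrow> u \<in> timep w ` Emk N w r"
  proof
    assume "u \<in> effective_times N w r"
    then obtain x k where "u = mark_time w x k" "- int N \<le> x" "x + 1 \<le> int N" "mark_time w x k \<le> r"
      unfolding effective_times_def by blast
    then show "u \<in> timep w ` Emk N w r"
      by (intro image_eqI[of _ _ "(x, k)"]) (auto simp: timep_def Emk_def RR_def)
  next
    assume "u \<in> timep w ` Emk N w r"
    then obtain x k where "u = mark_time w x k" "- int N \<le> x" "x + 1 \<le> int N" "mark_time w x k \<le> r"
      by (auto simp: timep_def Emk_def RR_def)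
    then show "u \<in> effective_times N w r"
      unfolding effective_times_def by blast
  qed
qed

lemma act_pairs: assumes "Good t w" "fst p \<in> RR N"
  shows "active_pairs_at N w (timep w p) = (if snd (w (fst p) (snd p)) then {fst p} else {})"
proof -
  have "x' = fst p \<and> k' = snd p" if "mark_time w x' k' = timep w p" for x' k'
    using Good_inj[OF assms(1), of x' k' "fst p" "snd p"] that by (simp add: timep_def)
  then show ?thesis using assms(2)
    unfolding active_pairs_at_def mark_active_def RR_def timep_def by auto
qed

lemma step_at_p: assumes "Good t w" "fst p \<in> RR N"
  shows "step_at N w (timep w p) ys = stpw w p ys"
  unfolding step_at_def act_pairs[OF assms] stpw_def by simp

lemma Emk_filter: assumes "Good t w" "r \<le> t"
  shows "Emk N w r = set (filter (\<lambda>p. timep w p \<le> r) (sm N t w))"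
proof -
  have "set (filter (\<lambda>p. timep w p \<le> r) (sm N t w)) = {p \<in> Emk N w t. timep w p \<le> r}"
    using sm_spec[OF assms(1), of N] by simp
  also have "\<dots> = Emk N w r" using assms(2) unfolding Emk_def by auto
  finally show ?thesis by simp
qed

lemma sorted_eff: assumes "Good t w" "r \<le> t"
  shows "sorted_list_of_set (effective_times N w r) = map (timep w) (filter (\<lambda>p. timep w p \<le> r) (sm N t w))"
proof -
  let ?L = "map (timep w) (filter (\<lambda>p. timep w p \<le> r) (sm N t w))"
  have "sorted_wrt (\<lambda>p q. timep w p < timep w q) (sm N t w)" using sm_spec[OF assms(1)] by blast
  then have "sorted_wrt (\<lambda>p q. timep w p < timep w q) (filter (\<lambda>p. timep w p \<le> r) (sm N t w))"
    by (rule sorted_wrt_filter)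
  then have s: "sorted_wrt (<) ?L" by (simp add: sorted_wrt_map)
  have setL: "set ?L = effective_times N w r" by (simp only: eff_times Emk_filter[OF assms] set_map)
  have fin: "finite (effective_times N w r)" using setL[symmetric] by simp
  show ?thesis
  proof (rule strict_sorted_equal[OF s])
    show "sorted_wrt (<) (sorted_list_of_set (effective_times N w r))" by simp
    show "set (sorted_list_of_set (effective_times N w r)) = set ?L"
      using fin setL set_sorted_list_of_set by metis
  qed
qed

lemma config_eq: assumes "Good t w" "r \<le> t"
  shows "config N w xs r = fold (stpw w) (filter (\<lambda>p. timep w p \<le> r) (sm N t w)) xs"
proof -
  have "config N w xs r = fold (step_at N w \<circ> timep w) (filter (\<lambda>p. timep w p \<le> r) (sm N t w)) xs"
    unfolding config_def sorted_eff[OF assms] fold_map ..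
  also have "\<dots> = fold (stpw w) (filter (\<lambda>p. timep w p \<le> r) (sm N t w)) xs"
  proof (rule fold_cong[OF refl refl])
    fix p assume "p \<in> set (filter (\<lambda>p. timep w p \<le> r) (sm N t w))"
    then have "fst p \<in> RR N" using Emk_filter[OF assms, of N] by (auto simp: Emk_def)
    then show "(step_at N w \<circ> timep w) p = stpw w p" using step_at_p[OF assms(1)] by (auto simp: fun_eq_iff)
  qed
  finally show ?thesis .
qed



type_synonym ent = "int \<times> nat \<times> bool \<times> bool"

definition ex :: "ent \<Rightarrow> int" where "ex e = fst e"
definition eb :: "ent \<Rightarrow> bool" where "eb e = fst (snd (snd e))"
definition ec :: "ent \<Rightarrow> bool" where "ec e = snd (snd (snd e))"

definition stp :: "ent \<Rightarrow> int list \<Rightarrow> int list" where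
  "stp e ys = (if eb e then map (swap_site (ex e)) ys else ys)"

definition ent :: "(int \<Rightarrow> nat \<Rightarrow> real \<times> bool) \<Rightarrow> real \<Rightarrow> int \<times> nat \<Rightarrow> ent" where
  "ent w s p = (fst p, snd p, snd (w (fst p) (snd p)), timep w p \<le> s)"

definition Wl :: "nat \<Rightarrow> real \<Rightarrow> real \<Rightarrow> (int \<Rightarrow> nat \<Rightarrow> real \<times> bool) \<Rightarrow> ent list" where
  "Wl N t s w = map (ent w s) (sm N t w)"

definition cfg :: "int list \<Rightarrow> ent list \<Rightarrow> nat \<Rightarrow> int list" where
  "cfg xs W i = fold stp (take (Suc i) W) xs"

definition hitat :: "int list \<Rightarrow> ent list \<Rightarrow> nat \<Rightarrow> bool" where
  "hitat xs W i \<longleftrightarrow> i < length W \<and> ec (W ! i) \<and> {ex (W ! i), ex (W ! i) + 1} = {cfg xs W i ! 0, cfg xs W i ! 1}"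

lemma stpw_ent: "stpw w p = stp (ent w s p)"
  by (auto simp: fun_eq_iff stpw_def stp_def ent_def eb_def ex_def)

lemma fold_stpw: "fold (stpw w) L xs = fold stp (map (ent w s) L) xs"
proof -
  have "stpw w = (\<lambda>p. stp (ent w s p))" by (rule ext) (rule stpw_ent)
  then show ?thesis by (simp add: fold_map comp_def)
qed

lemma filter_take:
  assumes "sorted_wrt (\<lambda>p q. f p < (f q::real)) S" "i < length S"
  shows "filter (\<lambda>p. f p \<le> f (S ! i)) S = take (Suc i) S"
proof -
  have S: "S = take (Suc i) S @ drop (Suc i) S" by simp
  have a: "\<forall>p\<in>set (take (Suc i) S). f p \<le> f (S ! i)"
  proof
    fix p assume "p \<in> set (take (Suc i) S)"
    then obtain j where j: "j < Suc i" "j < length S" "p = S ! j"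
      by (auto simp: in_set_conv_nth)
    show "f p \<le> f (S ! i)"
    proof (cases "j = i")
      case False
      then have "j < i" using j by simp
      then show ?thesis using assms j by (auto simp: sorted_wrt_iff_nth_less intro: less_imp_le)
    qed (use j in simp)
  qed
  have b: "\<forall>p\<in>set (drop (Suc i) S). \<not> f p \<le> f (S ! i)"
  proof
    fix p assume "p \<in> set (drop (Suc i) S)"
    then obtain j where j: "j < length S - Suc i" "p = S ! (Suc i + j)"
      by (auto simp: in_set_conv_nth)
    then show "\<not> f p \<le> f (S ! i)" using assms
      by (auto simp: sorted_wrt_iff_nth_less not_le)
  qed
  have "filter (\<lambda>p. f p \<le> f (S ! i)) S = filter (\<lambda>p. f p \<le> f (S ! i)) (take (Suc i) S) @ filter (\<lambda>p. f p \<le> f (S ! i)) (drop (Suc i) S)"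
    by (subst S, rule filter_append)
  also have "\<dots> = take (Suc i) S" using a b by simp
  finally show ?thesis .
qed

lemma config_t: assumes "Good t w"
  shows "config N w xs t = fold stp (Wl N t s w) xs"
proof -
  have "filter (\<lambda>p. timep w p \<le> t) (sm N t w) = sm N t w"
    using sm_spec[OF assms, of N] by (auto simp: Emk_def)
  then show ?thesis using config_eq[OF assms order_refl, of N xs] by (simp add: fold_stpw[of w _ _ s] Wl_def)
qed

lemma sm_le_t: assumes "Good t w" "i < length (sm N t w)"
  shows "timep w (sm N t w ! i) \<le> t" and "sm N t w ! i \<in> Emk N w t"
proof -
  show "sm N t w ! i \<in> Emk N w t" using sm_spec[OF assms(1), of N] assms(2) nth_mem by blast
  then show "timep w (sm N t w ! i) \<le> t" by (simp add: Emk_def)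
qed

lemma config_i: assumes "Good t w" "i < length (sm N t w)"
  shows "config N w xs (timep w (sm N t w ! i)) = cfg xs (Wl N t s w) i"
proof -
  have "config N w xs (timep w (sm N t w ! i)) = fold (stpw w) (filter (\<lambda>p. timep w p \<le> timep w (sm N t w ! i)) (sm N t w)) xs"
    by (rule config_eq[OF assms(1) sm_le_t(1)[OF assms]])
  also have "filter (\<lambda>p. timep w p \<le> timep w (sm N t w ! i)) (sm N t w) = take (Suc i) (sm N t w)"
    using sm_spec[OF assms(1), of N] assms(2) by (intro filter_take) auto
  finally show ?thesis by (simp add: fold_stpw[of w _ _ s] cfg_def Wl_def take_map)
qed

lemma fold_pres: "(\<And>y ys. y \<in> set L \<Longrightarrow> P ys \<Longrightarrow> P (g y ys)) \<Longrightarrow> P xs \<Longrightarrow> P (fold g L xs)"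
  by (induction L arbitrary: xs) auto

lemma set_sl_sub: "x \<in> set (sorted_list_of_set A) \<Longrightarrow> x \<in> A"
  by (cases "finite A") auto

lemma swap_Lambda: "x \<in> RR N \<Longrightarrow> p \<in> Lambda N \<Longrightarrow> swap_site x p \<in> Lambda N"
  by (auto simp: swap_site_def RR_def Lambda_def)

lemma config_props: assumes "set xs \<subseteq> Lambda N"
  shows "length (config N w xs r) = length xs \<and> set (config N w xs r) \<subseteq> Lambda N"
  unfolding config_def
proof (rule fold_pres[where P="\<lambda>ys. length ys = length xs \<and> set ys \<subseteq> Lambda N"])
  fix u ys assume ys: "length ys = length xs \<and> set ys \<subseteq> Lambda N"
  show "length (step_at N w u ys) = length xs \<and> set (step_at N w u ys) \<subseteq> Lambda N"
    unfolding step_at_def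
  proof (rule fold_pres[where P="\<lambda>ys. length ys = length xs \<and> set ys \<subseteq> Lambda N"])
    fix x zs assume x: "x \<in> set (sorted_list_of_set (active_pairs_at N w u))"
      and zs: "length zs = length xs \<and> set zs \<subseteq> Lambda N"
    have "x \<in> RR N" using set_sl_sub[OF x] by (auto simp: active_pairs_at_def RR_def)
    then show "length (map (swap_site x) zs) = length xs \<and> set (map (swap_site x) zs) \<subseteq> Lambda N"
      using zs swap_Lambda by auto
  qed (rule ys)
qed (use assms in simp)



lemma pair_abs: "{a, a + 1} = {b, c::int} \<Longrightarrow> \<bar>b - c\<bar> = 1"
  by (auto simp: doubleton_eq_iff)

lemma pair_in: "{a, a + 1} = {b, c::int} \<Longrightarrow> b \<in> L \<Longrightarrow> c \<in> L \<Longrightarrow> a \<in> L \<and> a + 1 \<in> L"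
  by (auto simp: doubleton_eq_iff)

lemma Wl_nth: "i < length (sm N t w) \<Longrightarrow> Wl N t s w ! i = ent w s (sm N t w ! i)"
  by (simp add: Wl_def)

lemma length_Wl[simp]: "length (Wl N t s w) = length (sm N t w)"
  by (simp add: Wl_def)

lemma tau_iff:
  assumes G: "Good t w" and st: "s < t" and len: "length xs \<ge> 2" and xsL: "set xs \<subseteq> Lambda N"
  shows "tau12 N w xs \<le> ereal s \<longleftrightarrow> (\<exists>i. hitat xs (Wl N t s w) i)"
proof -
  let ?S = "sm N t w" and ?W = "Wl N t s w"
  define Z where "Z = {r. 0 \<le> r \<and>
      (let c = config N w xs r in
        \<bar>c ! 0 - c ! 1\<bar> = 1 \<and>
        (\<exists>x k. mark_time w x k = r \<and> {x, x + 1} = {c ! 0, c ! 1}))}"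
  have tau: "tau12 N w xs = Inf (ereal ` Z)" unfolding tau12_def Z_def ..
  show ?thesis
  proof
    assume "\<exists>i. hitat xs ?W i"
    then obtain i where h: "hitat xs ?W i" by blast
    then have i: "i < length ?S" by (simp add: hitat_def)
    define r where "r = timep w (?S ! i)"
    have c: "config N w xs r = cfg xs ?W i" unfolding r_def by (rule config_i[OF G i])
    have eq: "{fst (?S ! i), fst (?S ! i) + 1} = {cfg xs ?W i ! 0, cfg xs ?W i ! 1}"
      and rs: "r \<le> s"
      using h i by (auto simp: hitat_def Wl_nth ent_def ex_def ec_def r_def)
    have "r \<in> Z"
      unfolding Z_def
    proof (intro CollectI conjI)
      show "0 \<le> r" using Good_pos[OF G] by (simp add: r_def timep_def less_imp_le)
      show "let c = config N w xs r in \<bar>c ! 0 - c ! 1\<bar> = 1 \<and> (\<exists>x k. mark_time w x k = r \<and> {x, x + 1} = {c ! 0, c ! 1})"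
        unfolding Let_def c using eq pair_abs[OF eq]
        by (intro conjI exI[of _ "fst (?S ! i)"] exI[of _ "snd (?S ! i)"]) (auto simp: r_def timep_def)
    qed
    then have "Inf (ereal ` Z) \<le> ereal r" by (intro Inf_lower) simp
    then show "tau12 N w xs \<le> ereal s" using rs tau by (metis ereal_less_eq(3) order_trans)
  next
    assume tle: "tau12 N w xs \<le> ereal s"
    show "\<exists>i. hitat xs ?W i"
    proof (rule ccontr)
      assume nh: "\<not> (\<exists>i. hitat xs ?W i)"
      have key: "s < r \<and> (r \<le> t \<longrightarrow> r \<in> timep w ` set ?S)" if r: "r \<in> Z" for r
      proof -
        let ?c = "config N w xs r"
        obtain x k where xk: "mark_time w x k = r" "{x, x + 1} = {?c ! 0, ?c ! 1}"
          using r unfolding Z_def Let_def by blast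
        have cp: "length ?c = length xs \<and> set ?c \<subseteq> Lambda N" by (rule config_props[OF xsL])
        then have l01: "0 < length ?c" "1 < length ?c" using len by auto
        have "?c ! 0 \<in> set ?c" "?c ! 1 \<in> set ?c" using nth_mem[OF l01(1)] nth_mem[OF l01(2)] by auto
        then have "?c ! 0 \<in> Lambda N" "?c ! 1 \<in> Lambda N" using cp by auto
        then have "x \<in> Lambda N \<and> x + 1 \<in> Lambda N" using pair_in[OF xk(2)] by blast
        then have xR: "x \<in> RR N" by (auto simp: Lambda_def RR_def)
        show ?thesis
        proof (cases "r \<le> t")
          case False then show ?thesis using st by simp
        next
          case True
          then have "(x, k) \<in> Emk N w t" using xR xk(1) by (simp add: Emk_def timep_def)
          then have "(x, k) \<in> set ?S" using sm_spec[OF G, of N] by simp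
          then obtain i where i: "i < length ?S" "?S ! i = (x, k)" by (auto simp: in_set_conv_nth)
          have rt: "timep w (?S ! i) = r" using i xk(1) by (simp add: timep_def)
          have "?c = cfg xs ?W i" using config_i[OF G i(1), of xs s] rt by simp
          then have "{ex (?W ! i), ex (?W ! i) + 1} = {cfg xs ?W i ! 0, cfg xs ?W i ! 1}"
            using xk(2) i by (simp add: Wl_nth ent_def ex_def)
          then have "\<not> ec (?W ! i)" using nh i by (auto simp: hitat_def)
          then have "s < r" using i rt by (simp add: Wl_nth ent_def ec_def)
          moreover have "r \<in> timep w ` set ?S" using rt i by (metis image_eqI nth_mem)
          ultimately show ?thesis by simp
        qed
      qed
      define F where "F = insert t {u \<in> timep w ` set ?S. s < u}"
      have Ffin: "finite F" "F \<noteq> {}" by (auto simp: F_def)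
      have Fgt: "\<forall>u\<in>F. s < u" using st by (auto simp: F_def)
      define d where "d = Min F"
      have ds: "s < d" using Fgt Ffin Min_in unfolding d_def by blast
      have dle: "d \<le> r" if "r \<in> Z" for r
      proof (cases "r \<le> t")
        case True
        then have "r \<in> F" using key[OF that] by (auto simp: F_def)
        then show ?thesis using Ffin unfolding d_def by simp
      next
        case False
        have "t \<in> F" by (simp add: F_def)
        then have "d \<le> t" using Ffin unfolding d_def by simp
        then show ?thesis using False by simp
      qed
      have "ereal d \<le> Inf (ereal ` Z)" by (rule Inf_greatest) (auto intro: dle)
      then have "ereal d \<le> ereal s" using tle tau order_trans by metis
      then show False using ds by simp
    qed
  qed
qed



definition hit :: "int list \<Rightarrow> ent list \<Rightarrow> bool" where
  "hit xs W \<longleftrightarrow> (\<exists>i. hitat xs W i)"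

definition istar :: "int list \<Rightarrow> ent list \<Rightarrow> nat" where
  "istar xs W = (LEAST i. hitat xs W i)"

definition flipe :: "ent \<Rightarrow> ent" where
  "flipe e = (fst e, fst (snd e), \<not> fst (snd (snd e)), snd (snd (snd e)))"

definition rhoW :: "int list \<Rightarrow> ent list \<Rightarrow> ent list" where
  "rhoW xs W = (if hit xs W then W[istar xs W := flipe (W ! istar xs W)] else W)"

definition wfW :: "nat \<Rightarrow> ent list \<Rightarrow> bool" where
  "wfW N W \<longleftrightarrow> (\<forall>e\<in>set W. ex e \<in> RR N)"

definition swap01 :: "int list \<Rightarrow> int list" where
  "swap01 ys = ys ! 1 # ys ! 0 # drop 2 ys"

lemma flipe_simps[simp]: "ex (flipe e) = ex e" "ec (flipe e) = ec e" "eb (flipe e) = (\<not> eb e)" "flipe (flipe e) = e"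
  by (auto simp: flipe_def ex_def ec_def eb_def)

lemma swap_swap[simp]: "swap_site a (swap_site a p) = p"
  by (auto simp: swap_site_def)

lemma length_stp[simp]: "length (stp e ys) = length ys"
  by (simp add: stp_def)

lemma length_fold_stp[simp]: "length (fold stp W ys) = length ys"
  by (induction W arbitrary: ys) auto

lemma distinct_stp: "distinct ys \<Longrightarrow> distinct (stp e ys)"
proof -
  assume d: "distinct ys"
  have "inj_on (swap_site a) A" for a A by (rule inj_onI) (metis swap_swap)
  then show ?thesis using d by (simp add: stp_def distinct_map)
qed

lemma distinct_fold_stp: "distinct ys \<Longrightarrow> distinct (fold stp W ys)"
  by (induction W arbitrary: ys) (auto intro: distinct_stp)

lemma pair_swap_iff: "{a, a + 1} = {swap_site a u, swap_site a v} \<longleftrightarrow> {a, a + 1} = {u, v::int}"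
  by (auto simp: swap_site_def doubleton_eq_iff split: if_splits)

lemma Lswap: assumes "length ys \<ge> 2"
  shows "{ex e, ex e + 1} = {stp e ys ! 0, stp e ys ! 1} \<longleftrightarrow> {ex e, ex e + 1} = {ys ! 0, ys ! 1}"
proof (cases "eb e")
  case True
  have l: "0 < length ys" "1 < length ys" using assms by auto
  have "stp e ys ! 0 = swap_site (ex e) (ys ! 0)" "stp e ys ! 1 = swap_site (ex e) (ys ! 1)"
    using True nth_map[OF l(1)] nth_map[OF l(2)] by (simp_all add: stp_def)
  then show ?thesis using pair_swap_iff[of "ex e" "ys ! 0" "ys ! 1"] by simp
next
  case False
  then show ?thesis by (simp add: stp_def)
qed

lemma cfg_split: "i < length W \<Longrightarrow> cfg xs W i = stp (W ! i) (fold stp (take i W) xs)"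
  by (simp add: cfg_def take_Suc_conv_app_nth)

lemma hit_rho:
  assumes len: "length xs \<ge> 2" and h: "hit xs W"
  shows "hit xs (rhoW xs W) \<and> istar xs (rhoW xs W) = istar xs W"
proof -
  let ?i = "istar xs W"
  have hi: "hitat xs W ?i" using h unfolding hit_def istar_def by (metis LeastI)
  have lt: "\<And>j. j < ?i \<Longrightarrow> \<not> hitat xs W j" unfolding istar_def using not_less_Least by blast
  have il: "?i < length W" using hi by (simp add: hitat_def)
  define W' where "W' = W[?i := flipe (W ! ?i)]"
  have rw: "rhoW xs W = W'" using h by (simp add: rhoW_def W'_def)
  have tk: "take j W' = take j W" if "j \<le> ?i" for j using that by (simp add: W'_def)
  have same: "hitat xs W' j = hitat xs W j" if "j < ?i" for j
  proof -
    have "take (Suc j) W' = take (Suc j) W" using that tk by simp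
    moreover have "W' ! j = W ! j" using that by (simp add: W'_def)
    ultimately show ?thesis by (simp add: hitat_def cfg_def W'_def)
  qed
  have atI: "hitat xs W' ?i"
  proof -
    let ?pre = "fold stp (take ?i W) xs"
    have lp: "length ?pre \<ge> 2" using len by simp
    have "cfg xs W ?i = stp (W ! ?i) ?pre" by (rule cfg_split[OF il])
    moreover have "cfg xs W' ?i = stp (flipe (W ! ?i)) ?pre"
      using cfg_split[of ?i W' xs] il tk[of ?i] by (simp add: W'_def)
    ultimately show ?thesis using hi il Lswap[OF lp, of "W ! ?i"] Lswap[OF lp, of "flipe (W ! ?i)"]
      by (simp add: hitat_def W'_def)
  qed
  have "(LEAST j. hitat xs W' j) = ?i"
  proof (rule Least_equality)
    show "hitat xs W' ?i" by (rule atI)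
    show "?i \<le> y" if "hitat xs W' y" for y using that same lt by (metis not_less)
  qed
  then have "istar xs W' = ?i" by (simp add: istar_def)
  then show ?thesis using atI rw by (auto simp: hit_def)
qed

lemma rho_rho: assumes "length xs \<ge> 2" shows "rhoW xs (rhoW xs W) = W"
proof (cases "hit xs W")
  case True
  have il: "istar xs W < length W"
    using True unfolding hit_def istar_def hitat_def by (metis (mono_tags, lifting) LeastI)
  show ?thesis using hit_rho[OF assms True] il
    by (simp add: rhoW_def True)
next
  case False then show ?thesis by (simp add: rhoW_def)
qed

lemma map_ex_upd: "map ex (W[i := flipe (W ! i)]) = map ex W"
proof (cases "i < length W")
  case True
  then show ?thesis by (simp add: map_update list_update_id[of "map ex W" i, simplified nth_map[OF True]] )
qed (simp add: list_update_beyond)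

lemma wf_rho: "wfW N (rhoW xs W) = wfW N W"
proof -
  have e: "wfW N V \<longleftrightarrow> set (map ex V) \<subseteq> RR N" for V by (auto simp: wfW_def)
  show ?thesis unfolding e rhoW_def by (cases "hit xs W") (simp_all only: if_True if_False map_ex_upd)
qed



definition PhiW :: "nat \<Rightarrow> int list \<Rightarrow> (int list \<Rightarrow> real) \<Rightarrow> ent list \<Rightarrow> real" where
  "PhiW N xs f W = (if wfW N W \<and> hit xs W then 1 else 0) * f (fold stp W xs)"

lemma swap01_len: "length ys \<ge> 2 \<Longrightarrow> length (swap01 ys) = length ys"
  by (simp add: swap01_def)

lemma map_swap01: "length ys \<ge> 2 \<Longrightarrow> map g (swap01 ys) = swap01 (map g ys)"
proof -
  assume l: "length ys \<ge> 2"
  then obtain a b zs where "ys = a # b # zs" by (cases ys; cases "tl ys") auto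
  then show ?thesis by (simp add: swap01_def)
qed

lemma stp_swap01: "length ys \<ge> 2 \<Longrightarrow> stp e (swap01 ys) = swap01 (stp e ys)"
  by (simp add: stp_def map_swap01)

lemma fold_swap01: "length ys \<ge> 2 \<Longrightarrow> fold stp L (swap01 ys) = swap01 (fold stp L ys)"
proof (induction L arbitrary: ys)
  case (Cons e L)
  then show ?case by (simp add: stp_swap01)
qed simp

lemma swap01_swap01: "length ys \<ge> 2 \<Longrightarrow> swap01 (swap01 ys) = ys"
proof -
  assume l: "length ys \<ge> 2"
  then obtain a b zs where "ys = a # b # zs" by (cases ys; cases "tl ys") auto
  then show ?thesis by (simp add: swap01_def)
qed

lemma map_swap_eq:
  assumes d: "distinct ys" and l: "length ys \<ge> 2" and e: "{a, a + 1} = {ys ! 0, ys ! 1}"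
  shows "map (swap_site a) ys = swap01 ys"
proof -
  obtain u v zs where ys: "ys = u # v # zs" using l by (cases ys; cases "tl ys") auto
  have uv: "{a, a + 1} = {u, v}" using e ys by simp
  have "u \<noteq> v" "u \<notin> set zs" "v \<notin> set zs" using d ys by auto
  then have z: "\<forall>z\<in>set zs. z \<noteq> a \<and> z \<noteq> a + 1" using uv by (auto simp: doubleton_eq_iff)
  have "map (swap_site a) zs = zs" using z by (induction zs) (auto simp: swap_site_def)
  moreover have "swap_site a u = v" "swap_site a v = u" using uv by (auto simp: swap_site_def doubleton_eq_iff)
  ultimately show ?thesis using ys by (simp add: swap01_def)
qed

lemma fold_split: "i < length W \<Longrightarrow> fold stp W xs = fold stp (drop (Suc i) W) (cfg xs W i)"
proof -
  assume "i < length W"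
  have "fold stp W xs = fold stp (take (Suc i) W @ drop (Suc i) W) xs" by simp
  also have "\<dots> = fold stp (drop (Suc i) W) (cfg xs W i)" by (simp only: fold_append comp_def cfg_def)
  finally show ?thesis .
qed

lemma fold_rho:
  assumes len: "length xs \<ge> 2" and d: "distinct xs" and h: "hit xs W"
  shows "fold stp (rhoW xs W) xs = swap01 (fold stp W xs)"
proof -
  let ?i = "istar xs W"
  have hi: "hitat xs W ?i" using h unfolding hit_def istar_def by (metis LeastI)
  have il: "?i < length W" using hi by (simp add: hitat_def)
  define W' where "W' = W[?i := flipe (W ! ?i)]"
  have rw: "rhoW xs W = W'" using h by (simp add: rhoW_def W'_def)
  let ?pre = "fold stp (take ?i W) xs"
  let ?e = "W ! ?i"
  have lp: "length ?pre \<ge> 2" using len by simp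
  have dp: "distinct ?pre" using d by (rule distinct_fold_stp)
  have c1: "cfg xs W ?i = stp ?e ?pre" by (rule cfg_split[OF il])
  have c2: "cfg xs W' ?i = stp (flipe ?e) ?pre"
    using cfg_split[of ?i W' xs] il by (simp add: W'_def)
  have "{ex ?e, ex ?e + 1} = {cfg xs W ?i ! 0, cfg xs W ?i ! 1}" using hi by (simp add: hitat_def)
  then have "{ex ?e, ex ?e + 1} = {?pre ! 0, ?pre ! 1}" using c1 Lswap[OF lp, of ?e] by simp
  then have ms: "map (swap_site (ex ?e)) ?pre = swap01 ?pre" by (rule map_swap_eq[OF dp lp])
  have cc: "cfg xs W' ?i = swap01 (cfg xs W ?i)"
  proof (cases "eb ?e")
    case True
    then show ?thesis using c1 c2 ms swap01_swap01[OF lp] by (simp add: stp_def)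
  next
    case False
    then show ?thesis using c1 c2 ms by (simp add: stp_def)
  qed
  have "fold stp W' xs = fold stp (drop (Suc ?i) W') (cfg xs W' ?i)"
    using il by (intro fold_split) (simp add: W'_def)
  also have "drop (Suc ?i) W' = drop (Suc ?i) W" by (simp add: W'_def)
  also have "fold stp (drop (Suc ?i) W) (cfg xs W' ?i) = swap01 (fold stp (drop (Suc ?i) W) (cfg xs W ?i))"
    unfolding cc by (rule fold_swap01) (simp add: cfg_def len)
  also have "fold stp (drop (Suc ?i) W) (cfg xs W ?i) = fold stp W xs" using fold_split[OF il] by simp
  finally show ?thesis using rw by simp
qed

lemma fold_Lambda: "wfW N W \<Longrightarrow> set ys \<subseteq> Lambda N \<Longrightarrow> set (fold stp W ys) \<subseteq> Lambda N"
proof (induction W arbitrary: ys)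
  case (Cons e W)
  have "set (stp e ys) \<subseteq> Lambda N"
    using Cons.prems swap_Lambda[of "ex e" N] by (auto simp: stp_def wfW_def)
  then show ?case using Cons by (simp add: wfW_def)
qed simp

lemma Phi_rho:
  assumes n: "n \<ge> 2" "length xs = n" and d: "distinct xs" and xsL: "set xs \<subseteq> Lambda N"
    and anti: "\<And>y1 y2 ys. length ys = n - 2 \<Longrightarrow> set (y1 # y2 # ys) \<subseteq> Lambda N \<Longrightarrow>
           f (y2 # y1 # ys) = - f (y1 # y2 # ys)"
  shows "PhiW N xs f (rhoW xs W) = - PhiW N xs f W"
proof (cases "wfW N W \<and> hit xs W")
  case True
  have len: "length xs \<ge> 2" using n by simp
  have h': "hit xs (rhoW xs W)" using hit_rho[OF len] True by blast
  have wf': "wfW N (rhoW xs W)" using wf_rho True by blast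
  let ?C = "fold stp W xs"
  obtain y1 y2 ys where C: "?C = y1 # y2 # ys"
    using len by (cases ?C; cases "tl ?C") (auto simp flip: length_fold_stp[of W xs])
  have lys: "length ys = n - 2" using C n length_fold_stp[of W xs] by simp
  have sL: "set (y1 # y2 # ys) \<subseteq> Lambda N" using fold_Lambda[OF _ xsL] True C by metis
  have "fold stp (rhoW xs W) xs = y2 # y1 # ys" using fold_rho[OF len d] True C by (simp add: swap01_def)
  then show ?thesis using True h' wf' C anti[OF lys sL] by (simp add: PhiW_def)
next
  case False
  then have b: "\<not> (wfW N (rhoW xs W) \<and> hit xs (rhoW xs W))"
    using wf_rho[of N xs W] by (auto simp: rhoW_def)
  show ?thesis unfolding PhiW_def if_not_P[OF False] if_not_P[OF b] by simp
qed



definition ek :: "ent \<Rightarrow> nat" where "ek e = fst (snd e)"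

lemma ek_flipe[simp]: "ek (flipe e) = ek e" by (simp add: ek_def flipe_def)

definition HH :: "nat \<Rightarrow> real \<Rightarrow> real \<Rightarrow> (int \<Rightarrow> nat \<Rightarrow> real \<times> bool) \<Rightarrow> ent list option" where
  "HH N t s w = (if Good t w then Some (Wl N t s w) else None)"

definition PhiO :: "nat \<Rightarrow> int list \<Rightarrow> (int list \<Rightarrow> real) \<Rightarrow> ent list option \<Rightarrow> real" where
  "PhiO N xs f v = (case v of None \<Rightarrow> 0 | Some W \<Rightarrow> PhiW N xs f W)"

definition rhoO :: "int list \<Rightarrow> ent list option \<Rightarrow> ent list option" where
  "rhoO xs v = map_option (rhoW xs) v"

definition Fv :: "int list \<Rightarrow> ent list option \<Rightarrow> (int \<Rightarrow> nat \<Rightarrow> real \<times> bool) \<Rightarrow> (int \<Rightarrow> nat \<Rightarrow> real \<times> bool)" where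
  "Fv xs v = (case v of None \<Rightarrow> id | Some W \<Rightarrow>
      (if hit xs W then flipw (ex (W ! istar xs W)) (ek (W ! istar xs W)) else id))"

lemma fst_flipw[simp]: "fst (flipw x k w y j) = fst (w y j)"
  by (simp add: flipw_def flipb_def)

lemma snd_flipw: "snd (flipw x k w y j) = (if y = x \<and> j = k then \<not> snd (w y j) else snd (w y j))"
  by (simp add: flipw_def flipb_def)

lemma flipw_flipw[simp]: "flipw x k (flipw x k w) = w"
  by (simp add: flipw_def flipb_def fun_eq_iff)

lemma time_flipw[simp]: "mark_time (flipw x k w) = mark_time w"
  by (simp add: mark_time_def fun_eq_iff)

lemma timep_flipw[simp]: "timep (flipw x k w) = timep w"
  by (simp add: timep_def fun_eq_iff)

lemma Good_flipw[simp]: "Good t (flipw x k w) = Good t w"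
  by (simp add: Good_def)

lemma Emk_flipw[simp]: "Emk N (flipw x k w) r = Emk N w r"
  by (simp add: Emk_def)

lemma sm_flipw[simp]: "sm N t (flipw x k w) = sm N t w"
  by (simp add: sm_def)

lemma rhoO_rhoO: "length xs \<ge> 2 \<Longrightarrow> rhoO xs (rhoO xs v) = v"
  by (cases v) (simp_all add: rhoO_def rho_rho)

lemma Fv_rhoO: assumes "length xs \<ge> 2" shows "Fv xs (rhoO xs v) = Fv xs v"
proof (cases v)
  case (Some W)
  show ?thesis
  proof (cases "hit xs W")
    case True
    have il: "istar xs W < length W"
      using True unfolding hit_def istar_def hitat_def by (metis (mono_tags, lifting) LeastI)
    then show ?thesis using Some True hit_rho[OF assms True]
      by (simp add: Fv_def rhoO_def rhoW_def)
  next
    case False then show ?thesis using Some by (simp add: Fv_def rhoO_def rhoW_def)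
  qed
qed (simp add: Fv_def rhoO_def)

lemma sm_distinct: "Good t w \<Longrightarrow> distinct (sm N t w)"
proof -
  assume G: "Good t w"
  have "sorted_wrt (<) (map (timep w) (sm N t w))" using sm_spec[OF G, of N] by (simp add: sorted_wrt_map)
  then have "distinct (map (timep w) (sm N t w))" by (simp add: strict_sorted_iff)
  then show ?thesis by (simp add: distinct_map)
qed

lemma wf_Wl: "Good t w \<Longrightarrow> wfW N (Wl N t s w)"
  using sm_spec[of t w N] by (auto simp: wfW_def Wl_def ent_def ex_def Emk_def)

lemma H_flip:
  assumes H: "HH N t s w = Some W" and h: "hit xs W"
  shows "HH N t s (Fv xs (Some W) w) = Some (rhoW xs W)"
proof -
  have G: "Good t w" using H by (simp add: HH_def split: if_splits)
  have W: "W = Wl N t s w" using H G by (simp add: HH_def)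
  let ?S = "sm N t w" and ?i = "istar xs W"
  have il: "?i < length W"
    using h unfolding hit_def istar_def hitat_def by (metis (mono_tags, lifting) LeastI)
  then have il': "?i < length ?S" using W by simp
  obtain x k where p: "?S ! ?i = (x, k)" by (cases "?S ! ?i")
  have exk: "ex (W ! ?i) = x" "ek (W ! ?i) = k" using W il' p by (simp_all add: Wl_nth ent_def ex_def ek_def)
  have F: "Fv xs (Some W) w = flipw x k w" using h exk by (simp add: Fv_def)
  have d: "distinct ?S" by (rule sm_distinct[OF G])
  have "Wl N t s (flipw x k w) = W[?i := flipe (W ! ?i)]"
  proof (rule nth_equalityI)
    show "length (Wl N t s (flipw x k w)) = length (W[?i := flipe (W ! ?i)])" using W by simp
    fix j assume "j < length (Wl N t s (flipw x k w))"
    then have j: "j < length ?S" by simp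
    show "Wl N t s (flipw x k w) ! j = W[?i := flipe (W ! ?i)] ! j"
    proof (cases "j = ?i")
      case True
      then show ?thesis using j W p il'
        by (simp add: Wl_def ent_def flipe_def snd_flipw)
    next
      case False
      then have "?S ! j \<noteq> (x, k)" using p d j il' by (metis nth_eq_iff_index_eq)
      then show ?thesis using j W False
        by (cases "?S ! j") (auto simp: Wl_def ent_def snd_flipw)
    qed
  qed
  then show ?thesis using G h F by (simp add: HH_def rhoW_def W)
qed

lemma integrand_eq:
  assumes G: "Good t w" and st: "s < t" and len: "length xs \<ge> 2" and xsL: "set xs \<subseteq> Lambda N"
  shows "(if tau12 N w xs \<le> ereal s then 1 else 0) * f (config N w xs t) = PhiO N xs f (HH N t s w)"
  using tau_iff[OF G st len xsL] config_t[OF G, of N xs s] wf_Wl[OF G, of N s] G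
  by (simp add: PhiO_def HH_def PhiW_def hit_def)



definition pk :: "ent \<Rightarrow> int \<times> nat" where "pk e = (ex e, ek e)"

definition Cond :: "nat \<Rightarrow> real \<Rightarrow> real \<Rightarrow> ent list \<Rightarrow> (int \<Rightarrow> nat \<Rightarrow> real \<times> bool) \<Rightarrow> bool" where
  "Cond N t s W w \<longleftrightarrow>
     (\<forall>p\<in>set (map pk W). fst p \<in> RR N \<and> mark_time w (fst p) (snd p) \<le> t) \<and>
     (\<forall>p. fst p \<in> RR N \<and> p \<notin> set (map pk W) \<longrightarrow> t < mark_time w (fst p) (snd p)) \<and>
     (\<forall>i j. i < j \<and> j < length W \<longrightarrow> mark_time w (ex (W ! i)) (ek (W ! i)) < mark_time w (ex (W ! j)) (ek (W ! j))) \<and>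
     (\<forall>i<length W. snd (w (ex (W ! i)) (ek (W ! i))) = eb (W ! i) \<and>
        (mark_time w (ex (W ! i)) (ek (W ! i)) \<le> s \<longleftrightarrow> ec (W ! i)))"

lemma pk_ent[simp]: "pk (ent w s p) = p"
  by (simp add: pk_def ent_def ex_def ek_def)

lemma Wl_char:
  assumes G: "Good t w"
  shows "Wl N t s w = W \<longleftrightarrow> Cond N t s W w"
proof
  assume W: "Wl N t s w = W"
  let ?S = "sm N t w"
  have "map pk (Wl N t s w) = ?S" by (simp add: Wl_def comp_def)
  then have mpk: "map pk W = ?S" using W by simp
  have sp: "set ?S = Emk N w t" "sorted_wrt (\<lambda>p q. timep w p < timep w q) ?S" using sm_spec[OF G] by auto
  have len: "length W = length ?S" using W length_Wl by metis
  have nth: "\<And>i. i < length W \<Longrightarrow> W ! i = ent w s (?S ! i)" using W len Wl_nth by metis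
  have setW: "set (map pk W) = Emk N w t" by (simp only: mpk sp(1))
  show "Cond N t s W w"
    unfolding Cond_def
  proof (intro conjI allI impI ballI)
    fix p assume "p \<in> set (map pk W)"
    then have "p \<in> Emk N w t" using setW by blast
    then show "fst p \<in> RR N" "mark_time w (fst p) (snd p) \<le> t" by (auto simp: Emk_def timep_def)
  next
    fix p assume "fst p \<in> RR N \<and> p \<notin> set (map pk W)"
    then have "p \<notin> Emk N w t" using setW by blast
    then show "t < mark_time w (fst p) (snd p)" using \<open>fst p \<in> RR N \<and> p \<notin> set (map pk W)\<close>
      unfolding Emk_def timep_def by (simp add: not_le)
  next
    fix i j assume "i < j \<and> j < length W"
    then show "mark_time w (ex (W ! i)) (ek (W ! i)) < mark_time w (ex (W ! j)) (ek (W ! j))"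
    proof -
      have "timep w (?S ! i) < timep w (?S ! j)" using sp(2) len \<open>i < j \<and> j < length W\<close>
        unfolding sorted_wrt_iff_nth_less by simp
      moreover have "W ! i = ent w s (?S ! i)" "W ! j = ent w s (?S ! j)" using nth \<open>i < j \<and> j < length W\<close> by auto
      ultimately show ?thesis by (simp add: ent_def ex_def ek_def timep_def)
    qed
  next
    fix i assume "i < length W"
    then show "snd (w (ex (W ! i)) (ek (W ! i))) = eb (W ! i)"
      "(mark_time w (ex (W ! i)) (ek (W ! i)) \<le> s) = ec (W ! i)"
      using nth[OF \<open>i < length W\<close>] by (simp_all add: ent_def ex_def ek_def eb_def ec_def timep_def)
  qed
next
  assume C: "Cond N t s W w"
  let ?S = "map pk W"
  have "set ?S = Emk N w t"
  proof (rule set_eqI)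
    fix p
    have c1: "\<forall>p\<in>set ?S. fst p \<in> RR N \<and> mark_time w (fst p) (snd p) \<le> t"
      and c2: "\<forall>p. fst p \<in> RR N \<and> p \<notin> set ?S \<longrightarrow> t < mark_time w (fst p) (snd p)"
      using C unfolding Cond_def by blast+
    show "p \<in> set ?S \<longleftrightarrow> p \<in> Emk N w t"
      using c1 c2 unfolding Emk_def timep_def by (metis (mono_tags, lifting) mem_Collect_eq not_le)
  qed
  moreover have "sorted_wrt (\<lambda>p q. timep w p < timep w q) ?S"
  proof -
    have "\<forall>i j. i < j \<and> j < length W \<longrightarrow> mark_time w (ex (W ! i)) (ek (W ! i)) < mark_time w (ex (W ! j)) (ek (W ! j))"
      using C unfolding Cond_def by blast
    then show ?thesis unfolding sorted_wrt_iff_nth_less by (simp add: timep_def pk_def)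
  qed
  ultimately have sm: "sm N t w = ?S" by (rule sm_unique[OF G])
  have "map (ent w s) ?S = W"
  proof (rule nth_equalityI)
    fix i assume "i < length (map (ent w s) ?S)"
    then have i: "i < length W" by simp
    have c: "snd (w (ex (W ! i)) (ek (W ! i))) = eb (W ! i) \<and> (mark_time w (ex (W ! i)) (ek (W ! i)) \<le> s \<longleftrightarrow> ec (W ! i))"
      using C i unfolding Cond_def by blast
    obtain a b c d where e: "W ! i = (a, b, c, d)" by (cases "W ! i") auto
    show "map (ent w s) ?S ! i = W ! i"
      using c i e by (simp add: ent_def pk_def ex_def ek_def eb_def ec_def timep_def)
  qed simp
  then show "Wl N t s w = W" by (simp add: Wl_def sm)
qed

lemma pred_Good[measurable]: "Measurable.pred (marks_measure N) (Good t)"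
  unfolding Good_def by measurable

lemma pred_snd_eq[measurable]: "Measurable.pred (marks_measure N) (\<lambda>w. snd (w x k) = b)"
  by measurable

lemma pred_Cond[measurable]: "Measurable.pred (marks_measure N) (Cond N t s W)"
  unfolding Cond_def by measurable

lemma meas_HH: "HH N t s \<in> measurable (marks_measure N) (count_space UNIV)"
proof (subst measurable_count_space_eq_countable)
  show "countable (UNIV :: ent list option set)" by simp
  show "HH N t s \<in> space (marks_measure N) \<rightarrow> UNIV \<and>
    (\<forall>a\<in>UNIV. HH N t s -` {a} \<inter> space (marks_measure N) \<in> sets (marks_measure N))"
  proof (intro conjI ballI)
    fix a :: "ent list option"
    show "HH N t s -` {a} \<inter> space (marks_measure N) \<in> sets (marks_measure N)"
    proof (cases a)
      case None
      have "HH N t s -` {a} \<inter> space (marks_measure N) = {w \<in> space (marks_measure N). \<not> Good t w}"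
        using None by (auto simp: HH_def)
      also have "\<dots> \<in> sets (marks_measure N)" by measurable
      finally show ?thesis .
    next
      case (Some W)
      have "HH N t s -` {a} \<inter> space (marks_measure N) = {w \<in> space (marks_measure N). Good t w \<and> Cond N t s W w}"
        using Some by (auto simp: HH_def Wl_char split: if_splits)
      also have "\<dots> \<in> sets (marks_measure N)" by measurable
      finally show ?thesis .
    qed
  qed simp
qed



lemma AE_Good: assumes N: "N \<ge> 1" and t: "0 \<le> t" shows "AE w in marks_measure N. Good t w"
  using AE_M_pos[OF N] AE_M_exists[OF N t] AE_M_ties[OF N]
  by eventually_elim (unfold Good_def, blast)

lemma HH_rho_set:
  assumes len: "length xs \<ge> 2" and N: "N \<ge> 1"
  shows "emeasure (marks_measure N) (HH N t s -` {rhoO xs v} \<inter> space (marks_measure N))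
       = emeasure (marks_measure N) (HH N t s -` {v} \<inter> space (marks_measure N))"
proof (cases "\<exists>W. v = Some W \<and> hit xs W")
  case False
  then have "rhoO xs v = v" by (cases v) (auto simp: rhoO_def rhoW_def)
  then show ?thesis by simp
next
  case True
  then obtain W where v: "v = Some W" and h: "hit xs W" by blast
  let ?M = "marks_measure N"
  let ?F = "Fv xs (Some W)"
  obtain x k where F: "?F = flipw x k" using h by (simp add: Fv_def)
  have Fm: "?F \<in> measurable ?M ?M" unfolding F by (rule meas_flipw)
  have h': "hit xs (rhoW xs W)" using hit_rho[OF len h] by blast
  have FF: "Fv xs (Some (rhoW xs W)) = ?F" using Fv_rhoO[OF len, of "Some W"] by (simp add: rhoO_def)
  have eq: "HH N t s -` {rhoO xs v} \<inter> space ?M = ?F -` (HH N t s -` {v} \<inter> space ?M) \<inter> space ?M"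
  proof (rule set_eqI, rule iffI)
    fix w assume w: "w \<in> HH N t s -` {rhoO xs v} \<inter> space ?M"
    then have "HH N t s w = Some (rhoW xs W)" by (simp add: v rhoO_def)
    then have "HH N t s (Fv xs (Some (rhoW xs W)) w) = Some (rhoW xs (rhoW xs W))" by (rule H_flip[OF _ h'])
    then have "HH N t s (?F w) = v" using FF rho_rho[OF len] v by simp
    moreover have "?F w \<in> space ?M" using w measurable_space[OF Fm] by blast
    ultimately show "w \<in> ?F -` (HH N t s -` {v} \<inter> space ?M) \<inter> space ?M" using w by simp
  next
    fix w assume w: "w \<in> ?F -` (HH N t s -` {v} \<inter> space ?M) \<inter> space ?M"
    then have "HH N t s (?F w) = Some W" using v by simp
    then have "HH N t s (?F (?F w)) = Some (rhoW xs W)" by (rule H_flip[OF _ h])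
    then show "w \<in> HH N t s -` {rhoO xs v} \<inter> space ?M" using w F v by (simp add: rhoO_def)
  qed
  have sv: "HH N t s -` {v} \<inter> space ?M \<in> sets ?M"
    using meas_HH by (rule measurable_sets) simp
  have "emeasure ?M (?F -` (HH N t s -` {v} \<inter> space ?M) \<inter> space ?M) = emeasure (distr ?M ?M ?F) (HH N t s -` {v} \<inter> space ?M)"
    by (rule emeasure_distr[OF Fm sv, symmetric])
  also have "distr ?M ?M ?F = ?M" unfolding F by (rule distr_flipw[OF N])
  finally show ?thesis using eq by simp
qed

lemma distr_rho:
  assumes len: "length xs \<ge> 2" and N: "N \<ge> 1"
  shows "distr (distr (marks_measure N) (count_space UNIV) (HH N t s)) (count_space UNIV) (rhoO xs)
       = distr (marks_measure N) (count_space UNIV) (HH N t s)"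
proof (rule measure_eqI_countable)
  show "sets (distr (distr (marks_measure N) (count_space UNIV) (HH N t s)) (count_space UNIV) (rhoO xs)) = Pow UNIV" by simp
  show "sets (distr (marks_measure N) (count_space UNIV) (HH N t s)) = Pow UNIV" by simp
  show "countable (UNIV :: ent list option set)" by simp
  fix a :: "ent list option"
  have pre: "rhoO xs -` {a} = {rhoO xs a}"
  proof (rule set_eqI)
    fix x show "x \<in> rhoO xs -` {a} \<longleftrightarrow> x \<in> {rhoO xs a}"
      using rhoO_rhoO[OF len, of x] rhoO_rhoO[OF len, of a] by auto
  qed
  have "emeasure (distr (distr (marks_measure N) (count_space UNIV) (HH N t s)) (count_space UNIV) (rhoO xs)) {a}
      = emeasure (distr (marks_measure N) (count_space UNIV) (HH N t s)) {rhoO xs a}"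
    by (subst emeasure_distr) (auto simp: pre)
  also have "\<dots> = emeasure (marks_measure N) (HH N t s -` {rhoO xs a} \<inter> space (marks_measure N))"
    by (rule emeasure_distr[OF meas_HH]) simp
  also have "\<dots> = emeasure (marks_measure N) (HH N t s -` {a} \<inter> space (marks_measure N))"
    by (rule HH_rho_set[OF len N])
  also have "\<dots> = emeasure (distr (marks_measure N) (count_space UNIV) (HH N t s)) {a}"
    by (rule emeasure_distr[OF meas_HH, symmetric]) simp
  finally show "emeasure (distr (distr (marks_measure N) (count_space UNIV) (HH N t s)) (count_space UNIV) (rhoO xs)) {a}
      = emeasure (distr (marks_measure N) (count_space UNIV) (HH N t s)) {a}" .
qed

theorem lemma4p3:
  fixes N n :: nat and xs :: "int list" and s t :: real and f :: "int list \<Rightarrow> real"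
  assumes "N \<ge> 1"
    and "n \<ge> 2" and "length xs = n" and "distinct xs" and "set xs \<subseteq> Lambda N"
    and "0 < s" and "s < t"
    and "\<And>y1 y2 ys. length ys = n - 2 \<Longrightarrow> set (y1 # y2 # ys) \<subseteq> Lambda N \<Longrightarrow>
           f (y2 # y1 # ys) = - f (y1 # y2 # ys)"
  shows "(\<integral>\<omega>. (if tau12 N \<omega> xs \<le> ereal s then 1 else 0) * f (config N \<omega> xs t)
            \<partial>marks_measure N) = 0"
proof -
  note N = assms(1) and n = assms(2,3) and d = assms(4) and xsL = assms(5) and st = assms(6,7)
    and anti = assms(8)
  have len: "length xs \<ge> 2" using n by simp
  let ?M = "marks_measure N"
  define g where "g w = (if tau12 N w xs \<le> ereal s then 1 else 0) * f (config N w xs t)" for w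
  let ?mu = "distr ?M (count_space UNIV) (HH N t s)"
  show ?thesis
  proof (cases "integrable ?M g")
    case False
    have "integral\<^sup>L ?M g = 0" using False by (rule not_integrable_integral_eq)
    then show ?thesis by (simp add: g_def[abs_def])
  next
    case True
    have gm: "g \<in> borel_measurable ?M" using True by auto
    have Pm: "(\<lambda>w. PhiO N xs f (HH N t s w)) \<in> borel_measurable ?M"
      by (rule measurable_compose[OF meas_HH]) simp
    have "integral\<^sup>L ?M g = integral\<^sup>L ?M (\<lambda>w. PhiO N xs f (HH N t s w))"
    proof (rule integral_cong_AE[OF gm Pm])
      have t0: "0 \<le> t" using st by simp
      show "AE w in ?M. g w = PhiO N xs f (HH N t s w)"
        using AE_Good[OF N t0]
        by eventually_elim (simp add: g_def integrand_eq[OF _ assms(7) len xsL])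
    qed
    also have "\<dots> = integral\<^sup>L ?mu (PhiO N xs f)"
      by (rule integral_distr[OF meas_HH, symmetric]) simp
    finally have I: "integral\<^sup>L ?M g = integral\<^sup>L ?mu (PhiO N xs f)" .
    have "integral\<^sup>L ?mu (PhiO N xs f) = integral\<^sup>L (distr ?mu (count_space UNIV) (rhoO xs)) (PhiO N xs f)"
      by (simp add: distr_rho[OF len N])
    also have "\<dots> = integral\<^sup>L ?mu (\<lambda>v. PhiO N xs f (rhoO xs v))"
      by (rule integral_distr) simp_all
    also have "\<dots> = integral\<^sup>L ?mu (\<lambda>v. - PhiO N xs f v)"
    proof (rule Bochner_Integration.integral_cong[OF refl])
      fix v :: "ent list option"
      show "PhiO N xs f (rhoO xs v) = - PhiO N xs f v"
      proof (cases v)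
        case (Some W)
        have "PhiW N xs f (rhoW xs W) = - PhiW N xs f W" by (rule Phi_rho[OF n d xsL], rule anti)
        then show ?thesis using Some by (simp add: PhiO_def rhoO_def)
      qed (simp add: PhiO_def rhoO_def)
    qed
    also have "\<dots> = - integral\<^sup>L ?mu (PhiO N xs f)" by simp
    finally have "integral\<^sup>L ?mu (PhiO N xs f) = 0" by simp
    then show ?thesis using I by (simp add: g_def[abs_def])
  qed
qed


end
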